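(* Let $k\geq 2$ and $i\in[k-1]$ be integers. Let $G$ be a graph which does not contain the configuration $(\dagger^{(1)})^k_2$, and let $f=u_1\dots u_{k-1}$ be a copy of $K_{k-1}$ in $G$ which is a copy of $K_{k-1}$ of two distinct $K_{k+1}$-components $C_1$ and $C_2$. Let $uv$ be an edge of $G$ such that $fu,fv\in C_1$, and let $w$ be a vertex of $G$ such that $fw\in C_2$. Then (i) $\Gamma(u_1,\dots,u_{i-1},u_{i+1},\dots,u_{k-1},w,u,v)$ is an independent set; (ii) $\Gamma(x_1,\dots,x_{i-1},u_{i+1},\dots,u_{k-1},w,u,v)$ is an independent set for any copy $x_1\dots x_{i-1}$ of $K_{i-1}$ in $G$ such that $x_j\in\Gamma(u_{j+1},\dots,u_{k-1},w,u,v)$ for each $j<i$.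
   Context: A $K_{k+1}$-walk in $G$ is a sequence of copies of $K_k$ in which consecutive copies lie in a common copy of $K_{k+1}$; the endpoints are then $K_{k+1}$-connected, and the equivalence classes of copies of $K_k$ are the $K_{k+1}$-components. A copy of $K_{k-1}$ is a copy of $K_{k-1}$ of a component $C$ if it extends to a copy of $K_k$ in $C$. For a clique $f$ and a vertex $x$ adjacent to all of $f$, $fx$ is the clique $f\cup\{x\}$, and $fx\in C$ means this copy of $K_k$ lies in $C$. $\Gamma(x_1,\dots,x_s)$ is the common neighbourhood. $G$ contains the configuration $(\dagger^{(1)})^k_2$ if there are (not necessarily distinct) vertices $u_1,\dots,u_k,v_2,w_{21}$ such that $u_1\dots u_k$ is a copy of $K_k$ in some $K_{k+1}$-component $C$, while $u_1v_2u_3\dots u_k$ and $u_2w_{21}u_3\dots u_k$ are copies of $K_k$ in $G$ not in $C$. *)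

theory Defs
  imports Main
begin

definition graph :: "'a set \<Rightarrow> ('a \<Rightarrow> 'a \<Rightarrow> bool) \<Rightarrow> bool" where
  "graph V E \<longleftrightarrow> finite V \<and> (\<forall>x y. E x y \<longrightarrow> x \<in> V \<and> y \<in> V)
     \<and> (\<forall>x y. E x y \<longrightarrow> E y x) \<and> (\<forall>x. \<not> E x x)"

definition is_clique :: "'a set \<Rightarrow> ('a \<Rightarrow> 'a \<Rightarrow> bool) \<Rightarrow> nat \<Rightarrow> 'a set \<Rightarrow> bool" where
  "is_clique V E k S \<longleftrightarrow> S \<subseteq> V \<and> finite S \<and> card S = k
     \<and> (\<forall>x\<in>S. \<forall>y\<in>S. x \<noteq> y \<longrightarrow> E x y)"

definition kstep :: "'a set \<Rightarrow> ('a \<Rightarrow> 'a \<Rightarrow> bool) \<Rightarrow> nat \<Rightarrow> 'a set \<Rightarrow> 'a set \<Rightarrow> bool" where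
  "kstep V E k S T \<longleftrightarrow> is_clique V E k S \<and> is_clique V E k T
     \<and> (\<exists>Q. is_clique V E (Suc k) Q \<and> S \<subseteq> Q \<and> T \<subseteq> Q)"

definition kconnected :: "'a set \<Rightarrow> ('a \<Rightarrow> 'a \<Rightarrow> bool) \<Rightarrow> nat \<Rightarrow> 'a set \<Rightarrow> 'a set \<Rightarrow> bool" where
  "kconnected V E k S T \<longleftrightarrow> is_clique V E k S \<and> (kstep V E k)\<^sup>*\<^sup>* S T"

definition kcomponent :: "'a set \<Rightarrow> ('a \<Rightarrow> 'a \<Rightarrow> bool) \<Rightarrow> nat \<Rightarrow> 'a set set \<Rightarrow> bool" where
  "kcomponent V E k C \<longleftrightarrow> (\<exists>S. is_clique V E k S \<and> C = {T. kconnected V E k S T})"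

definition clique_of_component ::
  "'a set \<Rightarrow> ('a \<Rightarrow> 'a \<Rightarrow> bool) \<Rightarrow> nat \<Rightarrow> 'a set set \<Rightarrow> 'a set \<Rightarrow> bool" where
  "clique_of_component V E k C f \<longleftrightarrow> is_clique V E (k - 1) f \<and> (\<exists>x. x \<notin> f \<and> insert x f \<in> C)"

definition common_nbhd :: "'a set \<Rightarrow> ('a \<Rightarrow> 'a \<Rightarrow> bool) \<Rightarrow> 'a set \<Rightarrow> 'a set" where
  "common_nbhd V E X = {y \<in> V. \<forall>x\<in>X. E x y}"

definition independent :: "('a \<Rightarrow> 'a \<Rightarrow> bool) \<Rightarrow> 'a set \<Rightarrow> bool" where
  "independent E S \<longleftrightarrow> (\<forall>x\<in>S. \<forall>y\<in>S. \<not> E x y)"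

definition has_dagger :: "'a set \<Rightarrow> ('a \<Rightarrow> 'a \<Rightarrow> bool) \<Rightarrow> nat \<Rightarrow> bool" where
  "has_dagger V E k \<longleftrightarrow> (\<exists>C u v2 w21. kcomponent V E k C
     \<and> is_clique V E k (u ` {1..k}) \<and> u ` {1..k} \<in> C
     \<and> is_clique V E k (insert (u 1) (insert v2 (u ` {3..k})))
     \<and> insert (u 1) (insert v2 (u ` {3..k})) \<notin> C
     \<and> is_clique V E k (insert (u 2) (insert w21 (u ` {3..k})))
     \<and> insert (u 2) (insert w21 (u ` {3..k})) \<notin> C)"

end

theory Submission
  imports Defs
begin

lemma clique_sub:
  assumes "is_clique V E m Q" "T \<subseteq> Q" "card T = j"
  shows "is_clique V E j T"
  using assms finite_subset unfolding is_clique_def by blast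

lemma comp_clique:
  assumes "kcomponent V E k C" "T \<in> C" shows "is_clique V E k T"
proof -
  obtain S where S: "is_clique V E k S" "C = {T. kconnected V E k S T}"
    using assms(1) kcomponent_def by blast
  have "(kstep V E k)\<^sup>*\<^sup>* S T" using assms(2) S kconnected_def by blast
  then show ?thesis
    by (induction rule: rtranclp_induct) (use S in \<open>auto simp: kstep_def\<close>)
qed

lemma comp_step:
  assumes "kcomponent V E k C" "S \<in> C" "is_clique V E (Suc k) Q" "S \<subseteq> Q" "T \<subseteq> Q" "card T = k"
  shows "T \<in> C"
proof -
  obtain S0 where S0: "is_clique V E k S0" "C = {T. kconnected V E k S0 T}"
    using assms(1) kcomponent_def by blast
  have "is_clique V E k S" using comp_clique assms by blast
  moreover have "is_clique V E k T" using clique_sub assms by blast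
  ultimately have "kstep V E k S T" using assms kstep_def by blast
  moreover have "(kstep V E k)\<^sup>*\<^sup>* S0 S" using assms(2) S0 kconnected_def by blast
  ultimately show ?thesis using S0 kconnected_def
    by (metis (mono_tags, lifting) mem_Collect_eq rtranclp.rtrancl_into_rtrancl)
qed

lemma kstep_sym_rt:
  assumes "(kstep V E k)\<^sup>*\<^sup>* S T" shows "(kstep V E k)\<^sup>*\<^sup>* T S"
  using assms
proof (induction rule: rtranclp_induct)
  case base then show ?case by simp
next
  case (step y z)
  have "kstep V E k z y" using step(2) unfolding kstep_def by blast
  then show ?case using step(3) by (meson converse_rtranclp_into_rtranclp)
qed

lemma comp_disj:
  assumes "kcomponent V E k C1" "kcomponent V E k C2" "T \<in> C1" "T \<in> C2"
  shows "C1 = C2"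
proof -
  obtain S1 where S1: "is_clique V E k S1" "C1 = {T. kconnected V E k S1 T}"
    using assms(1) kcomponent_def by blast
  obtain S2 where S2: "is_clique V E k S2" "C2 = {T. kconnected V E k S2 T}"
    using assms(2) kcomponent_def by blast
  have a: "(kstep V E k)\<^sup>*\<^sup>* S1 T" "(kstep V E k)\<^sup>*\<^sup>* S2 T"
    using assms S1 S2 by (auto simp: kconnected_def)
  have "(kstep V E k)\<^sup>*\<^sup>* S1 X \<longleftrightarrow> (kstep V E k)\<^sup>*\<^sup>* S2 X" for X
    using a kstep_sym_rt by (meson rtranclp_trans)
  then show ?thesis using S1 S2 unfolding kconnected_def by auto
qed

lemma insert_clique:
  assumes "is_clique V E m S" "y \<in> V" "y \<notin> S" "\<forall>s\<in>S. E s y \<and> E y s"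
  shows "is_clique V E (Suc m) (insert y S)"
  using assms unfolding is_clique_def by auto

lemma no_dagger:
  assumes "\<not> has_dagger V E k" "kcomponent V E k C" "K \<in> C"
    "a \<in> K" "b \<in> K" "a \<noteq> b"
    "is_clique V E k (insert a' (K - {a}))" "insert a' (K - {a}) \<notin> C"
    "is_clique V E k (insert b' (K - {b}))" "insert b' (K - {b}) \<notin> C"
  shows False
proof -
  have K: "is_clique V E k K" using comp_clique assms by blast
  then have fK: "finite K" "card K = k" unfolding is_clique_def by auto
  have ck: "card (K - {a,b}) = k - 2" using fK assms(4-6) by (simp add: card_Diff_subset)
  have "card {3..k} = k - 2" by simp
  then obtain h where h: "bij_betw h {3..k} (K - {a,b})"
    using finite_same_card_bij ck fK by (metis finite_Diff finite_atLeastAtMost)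
  define uu where "uu n = (if n = 1 then b else if n = 2 then a else h n)" for n
  have i3: "uu ` {3..k} = K - {a,b}"
  proof -
    have "uu ` {3..k} = h ` {3..k}" unfolding uu_def by (intro image_cong) auto
    then show ?thesis using h bij_betw_imp_surj_on by metis
  qed
  have k2: "k \<ge> 2" using fK assms(4-6)
    by (metis card_2_iff card_mono empty_subsetI insert_subset)
  have "{1..k} = insert 1 (insert 2 {3..k})" using k2 by auto
  then have "uu ` {1..k} = insert (uu 1) (insert (uu 2) (uu ` {3..k}))" by simp
  also have "\<dots> = insert b (insert a (K - {a,b}))" using i3 unfolding uu_def by simp
  finally have i1: "uu ` {1..k} = K" using assms(4-6) by auto
  have e1: "insert (uu 1) (insert a' (uu ` {3..k})) = insert a' (K - {a})"
    using i3 assms(4-6) unfolding uu_def by auto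
  have e2: "insert (uu 2) (insert b' (uu ` {3..k})) = insert b' (K - {b})"
    using i3 assms(4-6) unfolding uu_def by auto
  have "has_dagger V E k"
    unfolding has_dagger_def
    apply (rule exI[of _ C], rule exI[of _ uu], rule exI[of _ a'], rule exI[of _ b'])
    using assms K i1 e1 e2 by simp
  then show False using assms(1) by blast
qed

lemma core_B:
  assumes G: "graph V E" and nd: "\<not> has_dagger V E k"
    and C: "kcomponent V E k C1" "kcomponent V E k C2" "C1 \<noteq> C2"
    and g: "is_clique V E (k - 1) g" and k: "k \<ge> 2" and uv: "E u v"
    and m: "insert u g \<in> C1" "insert v g \<in> C1" "insert w g \<in> C2" and a: "a \<in> g"
    and x: "x \<in> common_nbhd V E ((g - {a}) \<union> {w, u, v})"
  shows "is_clique V E (k - 1) (insert x (g - {a})) \<and> insert u (insert x (g - {a})) \<in> C1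
    \<and> insert v (insert x (g - {a})) \<in> C1 \<and> insert w (insert x (g - {a})) \<in> C2"
proof -
  define h where "h = g - {a}"
  have sym: "\<And>p q. E p q \<Longrightarrow> E q p" and irr: "\<And>p. \<not> E p p"
    and inV: "\<And>p q. E p q \<Longrightarrow> p \<in> V \<and> q \<in> V" using G unfolding graph_def by blast+
  have gf: "finite g" "card g = k - 1" using g unfolding is_clique_def by auto
  have hc: "card h = k - 2" "finite h" using gf a unfolding h_def by auto
  have cu: "is_clique V E k (insert u g)" "is_clique V E k (insert v g)" "is_clique V E k (insert w g)"
    using comp_clique C m by blast+
  have gen: "y \<notin> g" if "is_clique V E k (insert y g)" for y
  proof
    assume "y \<in> g" then have "insert y g = g" by (rule insert_absorb)
    with that have "card g = k" unfolding is_clique_def by simp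
    with gf k show False by simp
  qed
  have nin: "u \<notin> g" "v \<notin> g" "w \<notin> g" using gen cu by blast+
  have adj: "\<forall>s\<in>g. E s u \<and> E u s" "\<forall>s\<in>g. E s v \<and> E v s" "\<forall>s\<in>g. E s w \<and> E w s"
  proof -
    have ag: "E s y \<and> E y s" if "is_clique V E k (insert y g)" "s \<in> g" "y \<notin> g" for s y
    proof -
      have "\<forall>p\<in>insert y g. \<forall>q\<in>insert y g. p \<noteq> q \<longrightarrow> E p q"
        using that(1) unfolding is_clique_def by blast
      moreover have "s \<noteq> y" using that by blast
      ultimately show ?thesis using that(2) by auto
    qed
    show "\<forall>s\<in>g. E s u \<and> E u s" using ag cu nin by blast
    show "\<forall>s\<in>g. E s v \<and> E v s" using ag cu nin by blast
    show "\<forall>s\<in>g. E s w \<and> E w s" using ag cu nin by blast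
  qed
  have xp0: "x \<in> V" "\<forall>s\<in>h. E s x" "E w x" "E u x" "E v x"
    using x unfolding common_nbhd_def h_def by blast+
  have xp: "x \<in> V" "\<forall>s\<in>h. E s x \<and> E x s" "E w x" "E u x" "E v x" "E x w" "E x u" "E x v"
    using xp0 sym[of _ x] sym[OF xp0(3)] sym[OF xp0(4)] sym[OF xp0(5)] by blast+
  have xn: "x \<notin> h" "x \<noteq> u" "x \<noteq> v" "x \<noteq> w" using xp irr by blast+
  have uvne: "u \<noteq> v" using uv irr by blast
  have hsub: "h \<subseteq> g" unfolding h_def by blast
  have nih: "u \<notin> h" "v \<notin> h" "w \<notin> h" using nin unfolding h_def by auto
  have Q1: "is_clique V E (Suc k) (insert v (insert u g))"
    by (rule insert_clique[OF cu(1)]) (use inV uv uvne nin adj sym[OF uv] in blast)+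
  have s1: "insert u (insert v h) \<in> C1"
    by (rule comp_step[OF C(1) m(1) Q1]) (use hc uvne nih k in \<open>auto simp: h_def\<close>)
  have c1: "is_clique V E k (insert u (insert v h))" using comp_clique C(1) s1 by blast
  have Q2: "is_clique V E (Suc k) (insert x (insert u (insert v h)))"
    by (rule insert_clique[OF c1]) (use xp xn in auto)
  have r1: "insert u (insert x h) \<in> C1"
    by (rule comp_step[OF C(1) s1 Q2]) (use hc xn nih uvne k in auto)
  have r2: "insert v (insert x h) \<in> C1"
    by (rule comp_step[OF C(1) s1 Q2]) (use hc xn nih uvne k in auto)
  have r0: "is_clique V E (k - 1) (insert x h)"
    by (rule clique_sub[OF Q2]) (use hc xn nih uvne k in auto)
  have wc: "is_clique V E k (insert w (insert x h))"
  proof -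
    have "is_clique V E (Suc (k - 1)) (insert w (insert x h))"
      by (rule insert_clique[OF r0]) (use inV xp xn nih adj hsub in blast)+
    then show ?thesis using k by simp
  qed
  have r3: "insert w (insert x h) \<in> C2"
  proof (rule ccontr)
    assume nn: "insert w (insert x h) \<notin> C2"
    have wa: "w \<noteq> a" using nin a by auto
    have e1: "insert x (insert w g - {a}) = insert w (insert x h)" using wa unfolding h_def by auto
    have e2: "insert u (insert w g - {w}) = insert u g" using nin by auto
    have n2: "insert u g \<notin> C2" using comp_disj C m by blast
    show False
      by (rule no_dagger[OF nd C(2) m(3), of a w x u]) (use a wa e1 e2 wc nn n2 cu in auto)
  qed
  show ?thesis using r0 r1 r2 r3 unfolding h_def by blast
qed

lemma core_A:
  assumes G: "graph V E" and nd: "\<not> has_dagger V E k"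
    and C: "kcomponent V E k C1" "kcomponent V E k C2" "C1 \<noteq> C2"
    and g: "is_clique V E (k - 1) g" and k: "k \<ge> 2" and uv: "E u v"
    and m: "insert u g \<in> C1" "insert v g \<in> C1" "insert w g \<in> C2" and a: "a \<in> g"
  shows "independent E (common_nbhd V E ((g - {a}) \<union> {w, u, v}))"
  unfolding independent_def
proof (intro ballI notI)
  fix y z assume y: "y \<in> common_nbhd V E ((g - {a}) \<union> {w, u, v})"
    and z: "z \<in> common_nbhd V E ((g - {a}) \<union> {w, u, v})" and yz: "E y z"
  define h where "h = g - {a}"
  have sym: "\<And>p q. E p q \<Longrightarrow> E q p" and irr: "\<And>p. \<not> E p p"
    using G unfolding graph_def by blast+
  have By: "is_clique V E (k - 1) (insert y h) \<and> insert u (insert y h) \<in> C1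
    \<and> insert w (insert y h) \<in> C2"
    using core_B[OF assms y] unfolding h_def by blast
  have zp0: "z \<in> V" "\<forall>s\<in>h. E s z" "E w z" "E u z"
    using z unfolding common_nbhd_def h_def by blast+
  have zp: "z \<in> V" "\<forall>s\<in>h. E s z \<and> E z s" "E w z" "E u z" "E z w" "E z u"
    using zp0 sym[of _ z] sym[OF zp0(3)] sym[OF zp0(4)] by blast+
  have yp: "\<forall>s\<in>h. E s y" "E w y" "E u y"
    using y unfolding common_nbhd_def h_def by auto
  have zn: "z \<notin> h" "z \<noteq> u" "z \<noteq> w" "z \<noteq> y" using zp yz irr by blast+
  have yn: "y \<notin> h" "y \<noteq> u" "y \<noteq> w" using yp irr by blast+
  have ck: "card (insert y (insert z h)) = k"
  proof -
    have "card (insert y h) = k - 1" using By unfolding is_clique_def by auto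
    moreover have "finite (insert y h)" using By unfolding is_clique_def by auto
    ultimately show ?thesis using zn yn k by simp
  qed
  have cw: "is_clique V E k (insert w (insert y h))" using comp_clique C By by blast
  have cu: "is_clique V E k (insert u (insert y h))" using comp_clique C By by blast
  have Qw: "is_clique V E (Suc k) (insert z (insert w (insert y h)))"
    by (rule insert_clique[OF cw]) (use zp zn yz sym[OF yz] yp in blast)+
  have Qu: "is_clique V E (Suc k) (insert z (insert u (insert y h)))"
    by (rule insert_clique[OF cu]) (use zp zn yz sym[OF yz] yp in blast)+
  have "insert y (insert z h) \<in> C2"
    by (rule comp_step[OF C(2) _ Qw, of "insert w (insert y h)"]) (use By ck in auto)
  moreover have "insert y (insert z h) \<in> C1"
    by (rule comp_step[OF C(1) _ Qu, of "insert u (insert y h)"]) (use By ck in auto)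
  ultimately show False using comp_disj C by blast
qed

theorem lemma5p3:
  fixes V :: "'a set" and E :: "'a \<Rightarrow> 'a \<Rightarrow> bool" and k i :: nat
    and uf :: "nat \<Rightarrow> 'a" and C1 C2 :: "'a set set" and u v w :: 'a
  assumes "graph V E"
    and "k \<ge> 2" and "1 \<le> i" and "i \<le> k - 1"
    and "\<not> has_dagger V E k"
    and "is_clique V E (k - 1) (uf ` {1..k-1})"
    and "kcomponent V E k C1" and "kcomponent V E k C2" and "C1 \<noteq> C2"
    and "clique_of_component V E k C1 (uf ` {1..k-1})"
    and "clique_of_component V E k C2 (uf ` {1..k-1})"
    and "E u v"
    and "insert u (uf ` {1..k-1}) \<in> C1" and "insert v (uf ` {1..k-1}) \<in> C1"
    and "insert w (uf ` {1..k-1}) \<in> C2"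
  shows "independent E (common_nbhd V E
            (uf ` ({1..k-1} - {i}) \<union> {w, u, v}))
       \<and> (\<forall>x :: nat \<Rightarrow> 'a.
            is_clique V E (i - 1) (x ` {1..i-1})
            \<and> (\<forall>j\<in>{1..i-1}. x j \<in> common_nbhd V E (uf ` {j+1..k-1} \<union> {w, u, v}))
            \<longrightarrow> independent E (common_nbhd V E
                  (x ` {1..i-1} \<union> uf ` {i+1..k-1} \<union> {w, u, v})))"
proof -
  have irr: "\<And>p. \<not> E p p" using assms(1) unfolding graph_def by blast
  have "card (uf ` {1..k-1}) = card {1..k-1}" using assms(6) unfolding is_clique_def by simp
  then have injuf: "inj_on uf {1..k-1}" by (simp add: inj_on_iff_eq_card)
  have P1: "independent E (common_nbhd V E (uf ` ({1..k-1} - {i}) \<union> {w, u, v}))"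
  proof -
    have "uf ` ({1..k-1} - {i}) = uf ` {1..k-1} - {uf i}"
      using injuf assms(3,4) by (simp add: inj_on_image_set_diff)
    moreover have "uf i \<in> uf ` {1..k-1}" using assms(3,4) by simp
    ultimately show ?thesis
      using core_A[OF assms(1,5,7,8,9,6,2,12,13,14,15)] by simp
  qed
  have P2: "independent E (common_nbhd V E (x ` {1..i-1} \<union> uf ` {i+1..k-1} \<union> {w, u, v}))"
    if xc: "is_clique V E (i - 1) (x ` {1..i-1})"
      and xn: "\<forall>j\<in>{1..i-1}. x j \<in> common_nbhd V E (uf ` {j+1..k-1} \<union> {w, u, v})" for x
  proof -
    have "card (x ` {1..i-1}) = card {1..i-1}" using xc unfolding is_clique_def by simp
    then have injx: "inj_on x {1..i-1}" by (simp add: inj_on_iff_eq_card)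
    define gg where "gg j = x ` {1..j} \<union> uf ` {j+1..k-1}" for j
    have rem: "gg j - {uf (j+1)} = x ` {1..j} \<union> uf ` {j+2..k-1}" if "j \<le> i - 1" for j
    proof -
      have "uf (j+1) \<notin> x ` {1..j}"
      proof
        assume "uf (j+1) \<in> x ` {1..j}"
        then obtain l where l: "l \<in> {1..j}" "x l = uf (j+1)" by (metis imageE)
        have "l \<in> {1..i-1}" using l(1) that by auto
        then have "x l \<in> common_nbhd V E (uf ` {l+1..k-1} \<union> {w, u, v})" using xn by blast
        moreover have "uf (j+1) \<in> uf ` {l+1..k-1}" using l that assms(4) by auto
        ultimately have "E (uf (j+1)) (x l)" unfolding common_nbhd_def by blast
        then show False using l(2) irr by simp
      qed
      moreover have "uf (j+1) \<notin> uf ` {j+2..k-1}"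
      proof
        assume "uf (j+1) \<in> uf ` {j+2..k-1}"
        then obtain l where l: "l \<in> {j+2..k-1}" "uf l = uf (j+1)" by (metis imageE)
        then have "l = j + 1" using injuf that assms(3,4)
          by (intro inj_onD[OF injuf]) auto
        then show False using l by auto
      qed
      moreover have "{j+1..k-1} = insert (j+1) {j+2..k-1}" using that assms(3,4) by auto
      then have "gg j = insert (uf (j+1)) (x ` {1..j} \<union> uf ` {j+2..k-1})" unfolding gg_def by auto
      ultimately show ?thesis by blast
    qed
    have inv: "is_clique V E (k - 1) (gg j) \<and> insert u (gg j) \<in> C1 \<and> insert v (gg j) \<in> C1
        \<and> insert w (gg j) \<in> C2" if "j \<le> i - 1" for j
      using that
    proof (induction j)
      case 0
      have "gg 0 = uf ` {1..k-1}" unfolding gg_def by simp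
      then show ?case using assms(6,13,14,15) by simp
    next
      case (Suc j)
      then have IH: "is_clique V E (k - 1) (gg j) \<and> insert u (gg j) \<in> C1 \<and> insert v (gg j) \<in> C1
        \<and> insert w (gg j) \<in> C2" by simp
      have j1: "Suc j \<in> {1..i-1}" using Suc.prems by simp
      have a: "uf (j+1) \<in> gg j" using Suc.prems assms(4) unfolding gg_def by auto
      have xj: "x (Suc j) \<in> common_nbhd V E ((gg j - {uf (j+1)}) \<union> {w, u, v})"
      proof -
        have x1: "x (Suc j) \<in> common_nbhd V E (uf ` {Suc j+1..k-1} \<union> {w, u, v})" using xn j1 by blast
        have "E y (x (Suc j))" if "y \<in> x ` {1..j}" for y
        proof -
          obtain l where l: "l \<in> {1..j}" "y = x l" using \<open>y \<in> x ` {1..j}\<close> by blast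
          have "x l \<noteq> x (Suc j)"
          proof
            assume "x l = x (Suc j)"
            then have "l = Suc j" using injx l Suc.prems by (intro inj_onD[OF injx]) auto
            then show False using l by auto
          qed
          then show ?thesis using xc l Suc.prems unfolding is_clique_def by auto
        qed
        then show ?thesis using x1 rem[OF Suc_leD[OF Suc.prems]]
          unfolding common_nbhd_def by auto
      qed
      have eq: "insert (x (Suc j)) (gg j - {uf (j+1)}) = gg (Suc j)"
      proof -
        have "{1..Suc j} = insert (Suc j) {1..j}" by auto
        then have "x ` {1..Suc j} = insert (x (Suc j)) (x ` {1..j})" by simp
        then show ?thesis using rem[OF Suc_leD[OF Suc.prems]] unfolding gg_def by simp
      qed
      show ?case using core_B[OF assms(1,5,7,8,9) _ assms(2,12) _ _ _ a xj] IH eq by simp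
    qed
    have fin: "gg (i-1) - {uf i} = x ` {1..i-1} \<union> uf ` {i+1..k-1}"
      using rem[of "i-1"] assms(3) by simp
    have a: "uf i \<in> gg (i-1)" using assms(3,4) unfolding gg_def by auto
    show ?thesis using core_A[OF assms(1,5,7,8,9) _ assms(2,12) _ _ _ a] inv[of "i-1"] fin by simp
  qed
  show ?thesis using P1 P2 by blast
qed

end
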